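(* Let $G$ be a 5-vertex-critical $(P_5,\text{chair})$-free graph that is not isomorphic to any graph in $\mathcal{F}=\{K_5,W,P,Q_1,Q_2,Q_3\}$, and let $C=v_1v_2v_3v_4v_5v_1$ be an induced $C_5$ in $G$. Then $|S_4(i)|\le 6$ for all $1\le i\le 5$.
   Context: All graphs are finite and simple; $P_5$ is the path on 5 vertices; the chair is a $P_4$ plus a vertex adjacent to exactly one of the two middle vertices of the $P_4$; "$H$-free" means no induced subgraph isomorphic to $H$; $G$ is $k$-vertex-critical if $\chi(G)=k$ and $\chi(G-v)<k$ for all $v$. Indices modulo 5. $S_4(i)=\{v\in V(G)\setminus V(C): N(v)\cap V(C)=\{v_{i-2},v_{i-1},v_{i+1},v_{i+2}\}\}$. The graphs of $\mathcal{F}$ (other than $K_5$) are given by adjacency lists on vertex sets $\{0,\dots,n-1\}$: $W$: 0:1 4 5 6; 1:0 2 5 6; 2:1 3 5 6; 3:2 4 5 6; 4:0 3 5 6; 5:0 1 2 3 4 6; 6:0 1 2 3 4 5. $P$: 0:1 4 5 6; 1:0 2 7 8; 2:1 3 5 6 7 8; 3:2 4 5 6 7 8; 4:0 3 7 8; 5:0 2 3 7; 6:0 2 3 8; 7:1 2 3 4 5 8; 8:1 2 3 4 6 7. $Q_1$: 0:1 4 5 6; 1:0 2 5 6 7 8; 2:1 3 5 6 7 8; 3:2 4 7 8; 4:0 3 7 8; 5:0 1 2 6 7; 6:0 1 2 5 8; 7:1 2 3 4 5; 8:1 2 3 4 6. $Q_2$: 0:1 4 5 6; 1:0 2 5 6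 7 8; 2:1 3 5 6 7 8; 3:2 4 5 6 7 8; 4:0 3 7 8; 5:0 2 3 6 7; 6:0 2 3 5 8; 7:1 2 3 4 5; 8:1 2 3 4 6. $Q_3$: 0:1 4 5 6; 1:0 2 5 7 8; 2:1 3 5 7 8; 3:2 4 6 7 8; 4:0 3 6 7 8; 5:0 1 2 6; 6:0 3 4 5 8; 7:1 2 3 4 8; 8:1 2 3 4 6 7. *)

theory Defs
  imports Main
begin

definition simple_graph :: "'a set \<Rightarrow> ('a \<Rightarrow> 'a \<Rightarrow> bool) \<Rightarrow> bool" where
  "simple_graph V E \<longleftrightarrow> finite V \<and> (\<forall>x y. E x y \<longrightarrow> x \<in> V \<and> y \<in> V)
     \<and> (\<forall>x y. E x y \<longrightarrow> E y x) \<and> (\<forall>x. \<not> E x x)"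

definition adj_list :: "nat list list \<Rightarrow> nat \<Rightarrow> nat \<Rightarrow> bool" where
  "adj_list L i j \<longleftrightarrow> (i < length L \<and> j < length L \<and> (j \<in> set (L ! i) \<or> i \<in> set (L ! j)))"

definition verts_list :: "nat list list \<Rightarrow> nat set" where
  "verts_list L = {0..<length L}"

definition contains_induced ::
  "'a set \<Rightarrow> ('a \<Rightarrow> 'a \<Rightarrow> bool) \<Rightarrow> 'b set \<Rightarrow> ('b \<Rightarrow> 'b \<Rightarrow> bool) \<Rightarrow> bool" where
  "contains_induced V E HV HE \<longleftrightarrow>
     (\<exists>f. inj_on f HV \<and> f ` HV \<subseteq> V \<and> (\<forall>x\<in>HV. \<forall>y\<in>HV. E (f x) (f y) \<longleftrightarrow> HE x y))"

definition H_free ::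
  "'a set \<Rightarrow> ('a \<Rightarrow> 'a \<Rightarrow> bool) \<Rightarrow> 'b set \<Rightarrow> ('b \<Rightarrow> 'b \<Rightarrow> bool) \<Rightarrow> bool" where
  "H_free V E HV HE \<longleftrightarrow> \<not> contains_induced V E HV HE"

definition graph_iso ::
  "'a set \<Rightarrow> ('a \<Rightarrow> 'a \<Rightarrow> bool) \<Rightarrow> 'b set \<Rightarrow> ('b \<Rightarrow> 'b \<Rightarrow> bool) \<Rightarrow> bool" where
  "graph_iso V E HV HE \<longleftrightarrow>
     (\<exists>f. bij_betw f V HV \<and> (\<forall>x\<in>V. \<forall>y\<in>V. E x y \<longleftrightarrow> HE (f x) (f y)))"

definition colorable :: "'a set \<Rightarrow> ('a \<Rightarrow> 'a \<Rightarrow> bool) \<Rightarrow> nat \<Rightarrow> bool" where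
  "colorable V E k \<longleftrightarrow>
     (\<exists>c :: 'a \<Rightarrow> nat. (\<forall>v\<in>V. c v < k) \<and> (\<forall>u\<in>V. \<forall>v\<in>V. E u v \<longrightarrow> c u \<noteq> c v))"

definition chromatic_number :: "'a set \<Rightarrow> ('a \<Rightarrow> 'a \<Rightarrow> bool) \<Rightarrow> nat" where
  "chromatic_number V E = (LEAST k. colorable V E k)"

definition del_vertex_adj :: "('a \<Rightarrow> 'a \<Rightarrow> bool) \<Rightarrow> 'a \<Rightarrow> 'a \<Rightarrow> 'a \<Rightarrow> bool" where
  "del_vertex_adj E v x y \<longleftrightarrow> E x y \<and> x \<noteq> v \<and> y \<noteq> v"

definition vertex_critical :: "'a set \<Rightarrow> ('a \<Rightarrow> 'a \<Rightarrow> bool) \<Rightarrow> nat \<Rightarrow> bool" where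
  "vertex_critical V E k \<longleftrightarrow> chromatic_number V E = k \<and>
     (\<forall>v\<in>V. chromatic_number (V - {v}) (del_vertex_adj E v) < k)"

definition P5_list :: "nat list list" where
  "P5_list = [[1], [0,2], [1,3], [2,4], [3]]"

definition chair_list :: "nat list list" where
  "chair_list = [[1], [0,2,4], [1,3], [2], [1]]"

definition K5_list :: "nat list list" where
  "K5_list = [[1,2,3,4], [0,2,3,4], [0,1,3,4], [0,1,2,4], [0,1,2,3]]"

definition W_list :: "nat list list" where
  "W_list = [[1,4,5,6], [0,2,5,6], [1,3,5,6], [2,4,5,6], [0,3,5,6], [0,1,2,3,4,6], [0,1,2,3,4,5]]"

definition P_list :: "nat list list" where
  "P_list = [[1,4,5,6], [0,2,7,8], [1,3,5,6,7,8], [2,4,5,6,7,8], [0,3,7,8], [0,2,3,7],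
             [0,2,3,8], [1,2,3,4,5,8], [1,2,3,4,6,7]]"

definition Q1_list :: "nat list list" where
  "Q1_list = [[1,4,5,6], [0,2,5,6,7,8], [1,3,5,6,7,8], [2,4,7,8], [0,3,7,8], [0,1,2,6,7],
              [0,1,2,5,8], [1,2,3,4,5], [1,2,3,4,6]]"

text \<open>Q2: the given lists are not symmetric (1 lists 5 and 6, but not conversely);
we symmetrise (adj_list takes the symmetric closure), i.e. edges 1-5 and 1-6 are present.\<close>
definition Q2_list :: "nat list list" where
  "Q2_list = [[1,4,5,6], [0,2,5,6,7,8], [1,3,5,6,7,8], [2,4,5,6,7,8], [0,3,7,8], [0,1,2,3,6,7],
              [0,1,2,3,5,8], [1,2,3,4,5], [1,2,3,4,6]]"

definition Q3_list :: "nat list list" where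
  "Q3_list = [[1,4,5,6], [0,2,5,7,8], [1,3,5,7,8], [2,4,6,7,8], [0,3,6,7,8], [0,1,2,6],
              [0,3,4,5,8], [1,2,3,4,8], [1,2,3,4,6,7]]"

definition family_F :: "nat list list set" where
  "family_F = {K5_list, W_list, P_list, Q1_list, Q2_list, Q3_list}"

definition induced_C5 :: "'a set \<Rightarrow> ('a \<Rightarrow> 'a \<Rightarrow> bool) \<Rightarrow> (nat \<Rightarrow> 'a) \<Rightarrow> bool" where
  "induced_C5 V E v \<longleftrightarrow> inj_on v {0..<5} \<and> v ` {0..<5} \<subseteq> V \<and>
     (\<forall>i<5. \<forall>j<5. E (v i) (v j) \<longleftrightarrow> (j = (i + 1) mod 5 \<or> i = (j + 1) mod 5))"

text \<open>S_4(i): vertices outside C adjacent on C exactly to v_{i-2}, v_{i-1}, v_{i+1}, v_{i+2}.\<close>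

definition S4 :: "'a set \<Rightarrow> ('a \<Rightarrow> 'a \<Rightarrow> bool) \<Rightarrow> (nat \<Rightarrow> 'a) \<Rightarrow> nat \<Rightarrow> 'a set" where
  "S4 V E v i = {x \<in> V - v ` {0..<5}.
     {y \<in> v ` {0..<5}. E x y} =
       {v ((i + 3) mod 5), v ((i + 4) mod 5), v ((i + 1) mod 5), v ((i + 2) mod 5)}}"

end

theory Submission
  imports Defs
begin


lemma colorable_mono: "colorable V E k \<Longrightarrow> k \<le> k' \<Longrightarrow> colorable V E k'"
  unfolding colorable_def by (meson less_le_trans)

lemma colorable_ex: assumes "finite V" "\<And>x. \<not> E x x" shows "\<exists>k. colorable V E k"
proof -
  obtain f n where f: "f ` V = {i::nat. i < n}" "inj_on f V"
    using finite_imp_inj_to_nat_seg[OF assms(1)] by blast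
  have "colorable V E n" unfolding colorable_def
  proof (intro exI[of _ f] conjI ballI impI)
    fix x assume "x \<in> V" then show "f x < n" using f by auto
  next
    fix x y assume "x \<in> V" "y \<in> V" "E x y" 
    show "f x \<noteq> f y"
    proof
      assume "f x = f y" then have "x = y" using f(2) \<open>x\<in>V\<close> \<open>y\<in>V\<close> by (auto dest: inj_onD)
      then show False using assms(2) \<open>E x y\<close> by simp
    qed
  qed
  then show ?thesis by blast
qed

lemma chrom_le_colorable:
  assumes "finite V" "\<And>x. \<not> E x x" "chromatic_number V E \<le> k"
  shows "colorable V E k"
proof -
  have "colorable V E (chromatic_number V E)"
    unfolding chromatic_number_def using colorable_ex[OF assms(1,2)] by (rule LeastI_ex)
  then show ?thesis using colorable_mono assms(3) by metis
qed

lemma chrom_eq_not_colorable: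
  assumes "chromatic_number V E = k" "k' < k"
  shows "\<not> colorable V E k'"
proof
  assume "colorable V E k'"
  then have "chromatic_number V E \<le> k'" unfolding chromatic_number_def by (rule Least_le)
  then show False using assms by simp
qed

lemma contains5:
  assumes "distinct [a,b,c,d,e]" "{a,b,c,d,e} \<subseteq> V" "length L = 5"
    and "\<forall>i<5. \<forall>j<5. E ([a,b,c,d,e]!i) ([a,b,c,d,e]!j) = adj_list L i j"
  shows "contains_induced V E (verts_list L) (adj_list L)"
  unfolding contains_induced_def verts_list_def
proof (intro exI[of _ "\<lambda>i. [a,b,c,d,e]!i"] conjI)
  show "inj_on (\<lambda>i. [a,b,c,d,e]!i) {0..<length L}"
    using assms(1,3) by (simp add: inj_on_def nth_eq_iff_index_eq)
  show "(\<lambda>i. [a,b,c,d,e]!i) ` {0..<length L} \<subseteq> V"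
  proof
    fix x assume "x \<in> (\<lambda>i. [a,b,c,d,e]!i) ` {0..<length L}"
    then obtain i where "i < 5" "x = [a,b,c,d,e]!i" using assms(3) by auto
    then show "x \<in> V" using assms(2) by (auto simp: less_Suc_eq nth_Cons')
  qed
  show "\<forall>x\<in>{0..<length L}. \<forall>y\<in>{0..<length L}. E ([a,b,c,d,e]!x) ([a,b,c,d,e]!y) = adj_list L x y"
    using assms(3,4) by auto
qed

lemma four_colors: "(p::nat) < 4 \<Longrightarrow> q < 4 \<Longrightarrow> r < 4 \<Longrightarrow> s < 4 \<Longrightarrow> t < 4 \<Longrightarrow>
  p \<noteq> q \<Longrightarrow> p \<noteq> r \<Longrightarrow> p \<noteq> s \<Longrightarrow> q \<noteq> r \<Longrightarrow> q \<noteq> s \<Longrightarrow> r \<noteq> s \<Longrightarrow>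
  t \<noteq> p \<Longrightarrow> t \<noteq> q \<Longrightarrow> t \<noteq> r \<Longrightarrow> t \<noteq> s \<Longrightarrow> False"
proof -
  assume h: "p < 4" "q < 4" "r < 4" "s < 4" "t < 4" "p \<noteq> q" "p \<noteq> r" "p \<noteq> s" "q \<noteq> r" "q \<noteq> s" "r \<noteq> s"
    "t \<noteq> p" "t \<noteq> q" "t \<noteq> r" "t \<noteq> s"
  have "{p,q,r,s,t} \<subseteq> {..<4}" using h by auto
  then have "card {p,q,r,s,t} \<le> card {..<4::nat}" by (intro card_mono) auto
  moreover have "card {p,q,r,s,t} = 5" using h by auto
  ultimately show False by simp
qed




locale crit =
  fixes V :: "'a set" and E :: "'a \<Rightarrow> 'a \<Rightarrow> bool" and v :: "nat \<Rightarrow> 'a"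
  assumes sg: "simple_graph V E"
    and vc: "vertex_critical V E 5"
    and p5: "H_free V E (verts_list P5_list) (adj_list P5_list)"
    and ch: "H_free V E (verts_list chair_list) (adj_list chair_list)"
    and c5: "induced_C5 V E v"
begin

lemma finV: "finite V" using sg unfolding simple_graph_def by blast
lemma Esym: "E x y = E y x" using sg unfolding simple_graph_def by metis
lemma Eirr: "\<not> E x x" using sg unfolding simple_graph_def by blast
lemma EV1: "E x y \<Longrightarrow> x \<in> V" using sg unfolding simple_graph_def by blast
lemma EV2: "E x y \<Longrightarrow> y \<in> V" using sg unfolding simple_graph_def by blast

lemma notcol: "\<not> colorable V E 4"
  using vc unfolding vertex_critical_def by (intro chrom_eq_not_colorable) auto

lemma col_del: assumes "w \<in> V"
  shows "\<exists>c. (\<forall>x\<in>V-{w}. c x < (4::nat)) \<and> (\<forall>x\<in>V-{w}. \<forall>y\<in>V-{w}. E x y \<longrightarrow> c x \<noteq> c y)"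
proof -
  have lt: "chromatic_number (V-{w}) (del_vertex_adj E w) < 5"
    using vc assms unfolding vertex_critical_def by blast
  have "colorable (V-{w}) (del_vertex_adj E w) 4"
    by (rule chrom_le_colorable) (use finV Eirr lt in \<open>simp_all add: del_vertex_adj_def\<close>)
  then obtain c where c: "\<forall>x\<in>V-{w}. c x < (4::nat)"
     "\<forall>x\<in>V-{w}. \<forall>y\<in>V-{w}. del_vertex_adj E w x y \<longrightarrow> c x \<noteq> c y"
    unfolding colorable_def by blast
  have "\<forall>x\<in>V-{w}. \<forall>y\<in>V-{w}. E x y \<longrightarrow> c x \<noteq> c y"
    using c(2) by (simp add: del_vertex_adj_def)
  then show ?thesis using c(1) by blast
qed

lemma all_less5: "(\<forall>i<(5::nat). P i) = (P 0 \<and> P 1 \<and> P 2 \<and> P 3 \<and> P 4)"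
  by (auto simp: numeral_eq_Suc less_Suc_eq)

lemma extend:
  assumes u: "u \<in> V" and c: "\<forall>x\<in>V-{u}. c x < (4::nat)" "\<forall>x\<in>V-{u}. \<forall>y\<in>V-{u}. E x y \<longrightarrow> c x \<noteq> c y"
    and al: "\<alpha> < 4" "\<forall>t\<in>V. E u t \<longrightarrow> c t \<noteq> \<alpha>"
  shows False
proof -
  have "colorable V E 4" unfolding colorable_def
  proof (intro exI[of _ "c(u:=\<alpha>)"] conjI ballI impI)
    fix x assume "x \<in> V" then show "(c(u:=\<alpha>)) x < 4" using c al by auto
  next
    fix x y assume xy: "x \<in> V" "y \<in> V" "E x y"
    show "(c(u:=\<alpha>)) x \<noteq> (c(u:=\<alpha>)) y"
    proof (cases "x = u")
      case True
      then have "y \<noteq> u" using xy Eirr by blast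
      then show ?thesis using True xy al by auto
    next
      case False
      show ?thesis
      proof (cases "y = u")
        case True
        then have "E u x" using xy Esym by blast
        then show ?thesis using True False xy al by auto
      next
        case False2: False
        then show ?thesis using False xy c by auto
      qed
    qed
  qed
  then show False using notcol by blast
qed

lemma F2:
  assumes "x \<in> V" "y \<in> V" "x \<noteq> y" "\<not> E x y" "\<And>t. E x t \<Longrightarrow> E y t"
  shows False
proof -
  obtain c where c: "\<forall>z\<in>V-{x}. c z < (4::nat)" "\<forall>z\<in>V-{x}. \<forall>w\<in>V-{x}. E z w \<longrightarrow> c z \<noteq> c w"
    using col_del[OF assms(1)] by blast
  show False
  proof (rule extend[OF assms(1) c, of "c y"])
    show "c y < 4" using c assms by auto
    show "\<forall>t\<in>V. E x t \<longrightarrow> c t \<noteq> c y"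
    proof (intro ballI impI)
      fix t assume t: "t \<in> V" "E x t"
      then have "t \<noteq> x" using Eirr by blast
      moreover have "E t y" using assms(5)[OF t(2)] Esym by blast
      ultimately show "c t \<noteq> c y" using c t assms by auto
    qed
  qed
qed

lemma D2:
  assumes "u \<in> V" "w \<in> V" "w' \<in> V" "u \<noteq> w" "u \<noteq> w'" "E w w'"
    and "\<And>t. E u t \<Longrightarrow> t = u' \<or> (E w t \<and> E w' t)"
  shows False
proof -
  obtain c where c: "\<forall>z\<in>V-{u}. c z < (4::nat)" "\<forall>z\<in>V-{u}. \<forall>y\<in>V-{u}. E z y \<longrightarrow> c z \<noteq> c y"
    using col_del[OF assms(1)] by blast
  have ww: "c w \<noteq> c w'" using c assms by auto
  show False
  proof (rule extend[OF assms(1) c, of "if c u' = c w then c w' else c w"])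
    show "(if c u' = c w then c w' else c w) < 4" using c assms by auto
    show "\<forall>t\<in>V. E u t \<longrightarrow> c t \<noteq> (if c u' = c w then c w' else c w)"
    proof (intro ballI impI)
      fix t assume t: "t \<in> V" "E u t"
      then have tu: "t \<noteq> u" using Eirr by blast
      from assms(7)[OF t(2)] show "c t \<noteq> (if c u' = c w then c w' else c w)"
      proof
        assume "t = u'" then show ?thesis using ww by auto
      next
        assume "E w t \<and> E w' t"
        then have "c w \<noteq> c t" "c w' \<noteq> c t" using c assms t tu by auto
        then show ?thesis by auto
      qed
    qed
  qed
qed

lemma noP5:
  assumes "distinct [a,b,c,d,e]" "{a,b,c,d,e} \<subseteq> V"
    "E a b" "E b c" "E c d" "E d e" "\<not> E a c" "\<not> E a d" "\<not> E a e" "\<not> E b d" "\<not> E b e" "\<not> E c e"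
  shows False
proof -
  have s: "E b a" "E c b" "E d c" "E e d" "\<not> E c a" "\<not> E d a" "\<not> E e a" "\<not> E d b" "\<not> E e b" "\<not> E e c"
    using assms Esym by blast+
  have "contains_induced V E (verts_list P5_list) (adj_list P5_list)"
    by (rule contains5[OF assms(1,2)]) (use assms s Eirr in \<open>simp_all add: all_less5 adj_list_def P5_list_def\<close>)
  then show False using p5 unfolding H_free_def by blast
qed

lemma nochair:
  assumes "distinct [a,b,c,d,e]" "{a,b,c,d,e} \<subseteq> V"
    "E a b" "E b c" "E c d" "E b e" "\<not> E a c" "\<not> E a d" "\<not> E a e" "\<not> E b d" "\<not> E c e" "\<not> E d e"
  shows False
proof -
  have s: "E b a" "E c b" "E d c" "E e b" "\<not> E c a" "\<not> E d a" "\<not> E e a" "\<not> E d b" "\<not> E e c" "\<not> E e d"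
    using assms Esym by blast+
  have "contains_induced V E (verts_list chair_list) (adj_list chair_list)"
    by (rule contains5[OF assms(1,2)]) (use assms s Eirr in \<open>simp_all add: all_less5 adj_list_def chair_list_def\<close>)
  then show False using ch unfolding H_free_def by blast
qed

lemma vV: "j < 5 \<Longrightarrow> v j \<in> V" using c5 unfolding induced_C5_def by auto
lemma vinj: "i < 5 \<Longrightarrow> j < 5 \<Longrightarrow> v i = v j \<Longrightarrow> i = j" using c5 unfolding induced_C5_def inj_on_def by auto
lemma vE: "i < 5 \<Longrightarrow> j < 5 \<Longrightarrow> E (v i) (v j) = (j = (i + 1) mod 5 \<or> i = (j + 1) mod 5)"
  using c5 unfolding induced_C5_def by auto

lemma cyc: "E (v 0) (v 1)" "E (v 1) (v 2)" "E (v 2) (v 3)" "E (v 3) (v 4)" "E (v 4) (v 0)"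
  "E (v 1) (v 0)" "E (v 2) (v 1)" "E (v 3) (v 2)" "E (v 4) (v 3)" "E (v 0) (v 4)"
  "\<not> E (v 0) (v 2)" "\<not> E (v 0) (v 3)" "\<not> E (v 1) (v 3)" "\<not> E (v 1) (v 4)" "\<not> E (v 2) (v 4)"
  "\<not> E (v 2) (v 0)" "\<not> E (v 3) (v 0)" "\<not> E (v 3) (v 1)" "\<not> E (v 4) (v 1)" "\<not> E (v 4) (v 2)"
  by (simp_all add: vE)

lemma vdist: "v 0 \<noteq> v 1" "v 0 \<noteq> v 2" "v 0 \<noteq> v 3" "v 0 \<noteq> v 4" "v 1 \<noteq> v 2" "v 1 \<noteq> v 3" "v 1 \<noteq> v 4" "v 2 \<noteq> v 3" "v 2 \<noteq> v 4" "v 3 \<noteq> v 4"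
proof -
  show "v 0 \<noteq> v 1"
  proof
    assume "v 0 = v 1"
    from vinj[OF _ _ this] show False by simp
  qed
  show "v 0 \<noteq> v 2"
  proof
    assume "v 0 = v 2"
    from vinj[OF _ _ this] show False by simp
  qed
  show "v 0 \<noteq> v 3"
  proof
    assume "v 0 = v 3"
    from vinj[OF _ _ this] show False by simp
  qed
  show "v 0 \<noteq> v 4"
  proof
    assume "v 0 = v 4"
    from vinj[OF _ _ this] show False by simp
  qed
  show "v 1 \<noteq> v 2"
  proof
    assume "v 1 = v 2"
    from vinj[OF _ _ this] show False by simp
  qed
  show "v 1 \<noteq> v 3"
  proof
    assume "v 1 = v 3"
    from vinj[OF _ _ this] show False by simp
  qed
  show "v 1 \<noteq> v 4"
  proof
    assume "v 1 = v 4"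
    from vinj[OF _ _ this] show False by simp
  qed
  show "v 2 \<noteq> v 3"
  proof
    assume "v 2 = v 3"
    from vinj[OF _ _ this] show False by simp
  qed
  show "v 2 \<noteq> v 4"
  proof
    assume "v 2 = v 4"
    from vinj[OF _ _ this] show False by simp
  qed
  show "v 3 \<noteq> v 4"
  proof
    assume "v 3 = v 4"
    from vinj[OF _ _ this] show False by simp
  qed
qed

lemma noK5:
  assumes "distinct [a,b,c,d,e]" "{a,b,c,d,e} \<subseteq> V"
    "E a b" "E a c" "E a d" "E a e" "E b c" "E b d" "E b e" "E c d" "E c e" "E d e"
  shows False
proof -
  have s: "E b a" "E c a" "E d a" "E e a" "E c b" "E d b" "E e b" "E d c" "E e c" "E e d"
    using assms Esym by blast+
  have "\<exists>j<5. v j \<notin> {a,b,c,d,e}"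
  proof (rule ccontr)
    assume "\<not> ?thesis"
    then have h: "v 0 \<in> {a,b,c,d,e}" "v 2 \<in> {a,b,c,d,e}" by auto
    have "E (v 0) (v 2)"
      using h assms(3-12) s vdist(2) by auto
    then show False using cyc by blast
  qed
  then obtain j where j: "j < 5" "v j \<notin> {a,b,c,d,e}" by blast
  obtain col where col: "\<forall>z\<in>V-{v j}. col z < (4::nat)" "\<forall>z\<in>V-{v j}. \<forall>y\<in>V-{v j}. E z y \<longrightarrow> col z \<noteq> col y"
    using col_del[OF vV[OF j(1)]] by blast
  have m: "a \<in> V-{v j}" "b \<in> V-{v j}" "c \<in> V-{v j}" "d \<in> V-{v j}" "e \<in> V-{v j}" using j assms(2) by auto
  have ne: "\<And>x y. x \<in> V-{v j} \<Longrightarrow> y \<in> V-{v j} \<Longrightarrow> E x y \<Longrightarrow> col x \<noteq> col y" using col(2) by blast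
  show False
    by (rule four_colors[of "col a" "col b" "col c" "col d" "col e"])
      (use col(1) m in blast, use col(1) m in blast, use col(1) m in blast, use col(1) m in blast, use col(1) m in blast,
       (rule ne; fact)+)
qed


end


context crit
begin
lemma vimg: "v ` {0..<5} = {v 0, v 1, v 2, v 3, v 4}"
proof -
  have "{0..<5::nat} = {0,1,2,3,4}" by auto
  then show ?thesis by simp
qed

lemma memS: "x \<in> S4 V E v 0 \<longleftrightarrow> x \<in> V \<and> x \<noteq> v 0 \<and> x \<noteq> v 1 \<and> x \<noteq> v 2 \<and> x \<noteq> v 3 \<and> x \<noteq> v 4
   \<and> \<not> E x (v 0) \<and> E x (v 1) \<and> E x (v 2) \<and> E x (v 3) \<and> E x (v 4)"
proof -
  have e: "{y \<in> {v 0, v 1, v 2, v 3, v 4}. E x y} = {v 3, v 4, v 1, v 2} \<longleftrightarrow>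
     \<not> E x (v 0) \<and> E x (v 1) \<and> E x (v 2) \<and> E x (v 3) \<and> E x (v 4)"
  proof
    assume h: "{y \<in> {v 0, v 1, v 2, v 3, v 4}. E x y} = {v 3, v 4, v 1, v 2}"
    have "v 0 \<notin> {v 3, v 4, v 1, v 2}" using vdist by auto
    then have "\<not> E x (v 0)" using h by blast
    moreover have "E x (v 1)" "E x (v 2)" "E x (v 3)" "E x (v 4)" using h by blast+
    ultimately show "\<not> E x (v 0) \<and> E x (v 1) \<and> E x (v 2) \<and> E x (v 3) \<and> E x (v 4)" by blast
  next
    assume h: "\<not> E x (v 0) \<and> E x (v 1) \<and> E x (v 2) \<and> E x (v 3) \<and> E x (v 4)"
    then show "{y \<in> {v 0, v 1, v 2, v 3, v 4}. E x y} = {v 3, v 4, v 1, v 2}" by auto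
  qed
  have "x \<in> S4 V E v 0 \<longleftrightarrow> x \<in> V \<and> x \<notin> {v 0, v 1, v 2, v 3, v 4} \<and> {y \<in> {v 0, v 1, v 2, v 3, v 4}. E x y} = {v 3, v 4, v 1, v 2}"
  proof -
    have m: "((0::nat)+3) mod 5 = 3" "((0::nat)+4) mod 5 = 4" "((0::nat)+1) mod 5 = 1" "((0::nat)+2) mod 5 = 2" by simp_all
    show ?thesis unfolding S4_def vimg m by blast
  qed
  then show ?thesis using e by blast
qed

lemma memSD: assumes "x \<in> S4 V E v 0"
  shows "x \<in> V" "x \<noteq> v 0" "x \<noteq> v 1" "x \<noteq> v 2" "x \<noteq> v 3" "x \<noteq> v 4"
   "v 0 \<noteq> x" "v 1 \<noteq> x" "v 2 \<noteq> x" "v 3 \<noteq> x" "v 4 \<noteq> x"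
   "\<not> E x (v 0)" "E x (v 1)" "E x (v 2)" "E x (v 3)" "E x (v 4)"
   "\<not> E (v 0) x" "E (v 1) x" "E (v 2) x" "E (v 3) x" "E (v 4) x"
proof -
  have h: "x \<in> V \<and> x \<noteq> v 0 \<and> x \<noteq> v 1 \<and> x \<noteq> v 2 \<and> x \<noteq> v 3 \<and> x \<noteq> v 4
   \<and> \<not> E x (v 0) \<and> E x (v 1) \<and> E x (v 2) \<and> E x (v 3) \<and> E x (v 4)" using assms unfolding memS .
  then show "x \<in> V" "x \<noteq> v 0" "x \<noteq> v 1" "x \<noteq> v 2" "x \<noteq> v 3" "x \<noteq> v 4"
   "v 0 \<noteq> x" "v 1 \<noteq> x" "v 2 \<noteq> x" "v 3 \<noteq> x" "v 4 \<noteq> x"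
   "\<not> E x (v 0)" "E x (v 1)" "E x (v 2)" "E x (v 3)" "E x (v 4)" by blast+
  show "\<not> E (v 0) x" "E (v 1) x" "E (v 2) x" "E (v 3) x" "E (v 4) x"
    using h Esym[of x "v 0"] Esym[of x "v 1"] Esym[of x "v 2"] Esym[of x "v 3"] Esym[of x "v 4"] by simp_all
qed

lemma memSI: assumes "x \<in> V" "x \<noteq> v 0" "x \<noteq> v 1" "x \<noteq> v 2" "x \<noteq> v 3" "x \<noteq> v 4"
   "\<not> E x (v 0)" "E x (v 1)" "E x (v 2)" "E x (v 3)" "E x (v 4)"
  shows "x \<in> S4 V E v 0"
  using assms unfolding memS by blast

lemma vdist': "v 1 \<noteq> v 0" "v 2 \<noteq> v 0" "v 3 \<noteq> v 0" "v 4 \<noteq> v 0" "v 2 \<noteq> v 1" "v 3 \<noteq> v 1"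
  "v 4 \<noteq> v 1" "v 3 \<noteq> v 2" "v 4 \<noteq> v 2" "v 4 \<noteq> v 3"
  using vdist by metis+

lemma vV': "v 0 \<in> V" "v 1 \<in> V" "v 2 \<in> V" "v 3 \<in> V" "v 4 \<in> V" by (simp_all add: vV)

lemma L3:
  assumes aS: "a \<in> S4 V E v 0" and bS: "b \<in> S4 V E v 0" and cS: "c \<in> S4 V E v 0"
    and ab: "E a b" and bc: "E b c" and nac: "\<not> E a c" and ac: "a \<noteq> c"
    and za: "E z a" and nzc: "\<not> E z c" and zV: "z \<in> V"
  shows "z \<in> S4 V E v 0 \<and> \<not> E z b"
proof -
  note A = memSD[OF aS] memSD[OF bS] memSD[OF cS]
  have fl: "E b a" "E c b" "\<not> E c a" "E a z" "\<not> E c z" using ab bc nac za nzc Esym by blast+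
  have dz: "z \<noteq> v 0" "z \<noteq> v 1" "z \<noteq> v 2" "z \<noteq> v 3" "z \<noteq> v 4"
    using za nzc A by auto
  have dz': "v 0 \<noteq> z" "v 1 \<noteq> z" "v 2 \<noteq> z" "v 3 \<noteq> z" "v 4 \<noteq> z" using dz by auto
  have dd: "a \<noteq> b" "b \<noteq> c" "z \<noteq> a" "z \<noteq> b" "z \<noteq> c" "b \<noteq> a" "c \<noteq> b" "a \<noteq> z" "b \<noteq> z" "c \<noteq> z" "c \<noteq> a"
    using ab bc za nzc Eirr ac fl by auto
  note F = A fl dz dz' dd cyc vdist vdist' vV' zV ab bc nac za nzc ac
  have lf1: "\<not> (E z (v 0) \<and> \<not> E z (v 3))"
  proof
    assume "E z (v 0) \<and> \<not> E z (v 3)"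
    then have hh: "E z (v 0)" "\<not> E z (v 3)" by blast+
    show False by (rule noP5[of c "(v 3)" a z "(v 0)"]) (simp_all add: F hh Esym[of "(v 0)" "z"] Esym[of "(v 1)" "z"] Esym[of "(v 2)" "z"] Esym[of "(v 3)" "z"] Esym[of "(v 4)" "z"] Esym[of "b" "z"]  del: One_nat_def)
  qed
  have lf2: "\<not> (\<not> E z (v 0) \<and> E z (v 1) \<and> \<not> E z (v 3))"
  proof
    assume "\<not> E z (v 0) \<and> E z (v 1) \<and> \<not> E z (v 3)"
    then have hh: "\<not> E z (v 0)" "E z (v 1)" "\<not> E z (v 3)" by blast+
    show False by (rule nochair[of "(v 0)" "(v 1)" c "(v 3)" z]) (simp_all add: F hh Esym[of "(v 0)" "z"] Esym[of "(v 1)" "z"] Esym[of "(v 2)" "z"] Esym[of "(v 3)" "z"] Esym[of "(v 4)" "z"] Esym[of "b" "z"]  del: One_nat_def)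
  qed
  have lf3: "\<not> (\<not> E z (v 0) \<and> \<not> E z (v 1) \<and> \<not> E z (v 3))"
  proof
    assume "\<not> E z (v 0) \<and> \<not> E z (v 1) \<and> \<not> E z (v 3)"
    then have hh: "\<not> E z (v 0)" "\<not> E z (v 1)" "\<not> E z (v 3)" by blast+
    show False by (rule nochair[of "(v 0)" "(v 1)" a z c]) (simp_all add: F hh Esym[of "(v 0)" "z"] Esym[of "(v 1)" "z"] Esym[of "(v 2)" "z"] Esym[of "(v 3)" "z"] Esym[of "(v 4)" "z"] Esym[of "b" "z"]  del: One_nat_def)
  qed
  have tg1: "E z (v 3)" using lf1 lf2 lf3  by blast
  have lf4: "\<not> (E z (v 0) \<and> \<not> E z (v 2))"
  proof
    assume "E z (v 0) \<and> \<not> E z (v 2)"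
    then have hh: "E z (v 0)" "\<not> E z (v 2)" by blast+
    show False by (rule noP5[of c "(v 2)" a z "(v 0)"]) (simp_all add: F hh Esym[of "(v 0)" "z"] Esym[of "(v 1)" "z"] Esym[of "(v 2)" "z"] Esym[of "(v 3)" "z"] Esym[of "(v 4)" "z"] Esym[of "b" "z"] tg1 del: One_nat_def)
  qed
  have lf5: "\<not> (\<not> E z (v 0) \<and> E z (v 1) \<and> \<not> E z (v 2) \<and> E z (v 4))"
  proof
    assume "\<not> E z (v 0) \<and> E z (v 1) \<and> \<not> E z (v 2) \<and> E z (v 4)"
    then have hh: "\<not> E z (v 0)" "E z (v 1)" "\<not> E z (v 2)" "E z (v 4)" by blast+
    show False by (rule nochair[of "(v 0)" "(v 4)" c "(v 2)" z]) (simp_all add: F hh Esym[of "(v 0)" "z"] Esym[of "(v 1)" "z"] Esym[of "(v 2)" "z"] Esym[of "(v 3)" "z"] Esym[of "(v 4)" "z"] Esym[of "b" "z"] tg1 del: One_nat_def)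
  qed
  have lf6: "\<not> (\<not> E z (v 0) \<and> E z (v 1) \<and> \<not> E z (v 2) \<and> \<not> E z (v 4))"
  proof
    assume "\<not> E z (v 0) \<and> E z (v 1) \<and> \<not> E z (v 2) \<and> \<not> E z (v 4)"
    then have hh: "\<not> E z (v 0)" "E z (v 1)" "\<not> E z (v 2)" "\<not> E z (v 4)" by blast+
    show False by (rule nochair[of "(v 0)" "(v 4)" a z c]) (simp_all add: F hh Esym[of "(v 0)" "z"] Esym[of "(v 1)" "z"] Esym[of "(v 2)" "z"] Esym[of "(v 3)" "z"] Esym[of "(v 4)" "z"] Esym[of "b" "z"] tg1 del: One_nat_def)
  qed
  have lf7: "\<not> (\<not> E z (v 0) \<and> \<not> E z (v 1) \<and> \<not> E z (v 2))"
  proof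
    assume "\<not> E z (v 0) \<and> \<not> E z (v 1) \<and> \<not> E z (v 2)"
    then have hh: "\<not> E z (v 0)" "\<not> E z (v 1)" "\<not> E z (v 2)" by blast+
    show False by (rule noP5[of "(v 0)" "(v 1)" "(v 2)" "(v 3)" z]) (simp_all add: F hh Esym[of "(v 0)" "z"] Esym[of "(v 1)" "z"] Esym[of "(v 2)" "z"] Esym[of "(v 3)" "z"] Esym[of "(v 4)" "z"] Esym[of "b" "z"] tg1 del: One_nat_def)
  qed
  have tg2: "E z (v 2)" using lf4 lf5 lf6 lf7 tg1 by blast
  have lf8: "\<not> (E z b \<and> E z (v 0))"
  proof
    assume "E z b \<and> E z (v 0)"
    then have hh: "E z b" "E z (v 0)" by blast+
    show False by (rule noK5[of "(v 2)" "(v 3)" a b z]) (simp_all add: F hh Esym[of "(v 0)" "z"] Esym[of "(v 1)" "z"] Esym[of "(v 2)" "z"] Esym[of "(v 3)" "z"] Esym[of "(v 4)" "z"] Esym[of "b" "z"] tg1 tg2 del: One_nat_def)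
  qed
  have lf9: "\<not> (\<not> E z b \<and> E z (v 0))"
  proof
    assume "\<not> E z b \<and> E z (v 0)"
    then have hh: "\<not> E z b" "E z (v 0)" by blast+
    show False by (rule noP5[of c b a z "(v 0)"]) (simp_all add: F hh Esym[of "(v 0)" "z"] Esym[of "(v 1)" "z"] Esym[of "(v 2)" "z"] Esym[of "(v 3)" "z"] Esym[of "(v 4)" "z"] Esym[of "b" "z"] tg1 tg2 del: One_nat_def)
  qed
  have tg3: "\<not> E z (v 0)" using lf8 lf9 tg1 tg2 by blast
  have lf10: "\<not> (E z b)"
  proof
    assume "E z b"
    then have hh: "E z b" by blast+
    show False by (rule noK5[of "(v 2)" "(v 3)" a b z]) (simp_all add: F hh Esym[of "(v 0)" "z"] Esym[of "(v 1)" "z"] Esym[of "(v 2)" "z"] Esym[of "(v 3)" "z"] Esym[of "(v 4)" "z"] Esym[of "b" "z"] tg1 tg2 tg3 del: One_nat_def)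
  qed
  have tg4: "\<not> E z b" using lf10 tg1 tg2 tg3 by blast
  have lf11: "\<not> (\<not> E z (v 1))"
  proof
    assume "\<not> E z (v 1)"
    then have hh: "\<not> E z (v 1)" by blast+
    show False by (rule nochair[of "(v 0)" "(v 1)" a z c]) (simp_all add: F hh Esym[of "(v 0)" "z"] Esym[of "(v 1)" "z"] Esym[of "(v 2)" "z"] Esym[of "(v 3)" "z"] Esym[of "(v 4)" "z"] Esym[of "b" "z"] tg1 tg2 tg3 tg4 del: One_nat_def)
  qed
  have tg5: "E z (v 1)" using lf11 tg1 tg2 tg3 tg4 by blast
  have lf12: "\<not> (\<not> E z (v 4))"
  proof
    assume "\<not> E z (v 4)"
    then have hh: "\<not> E z (v 4)" by blast+
    show False by (rule nochair[of "(v 0)" "(v 4)" a z c]) (simp_all add: F hh Esym[of "(v 0)" "z"] Esym[of "(v 1)" "z"] Esym[of "(v 2)" "z"] Esym[of "(v 3)" "z"] Esym[of "(v 4)" "z"] Esym[of "b" "z"] tg1 tg2 tg3 tg4 tg5 del: One_nat_def)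
  qed
  have tg6: "E z (v 4)" using lf12 tg1 tg2 tg3 tg4 tg5 by blast
  show ?thesis using memSI[OF zV dz] tg1 tg2 tg3 tg4 tg5 tg6 by blast
qed

lemma TL1:
  assumes xS: "x \<in> S4 V E v 0" and yS: "y \<in> S4 V E v 0" and nxy: "\<not> E x y" and xy: "x \<noteq> y"
    and zx: "E z x" and nzy: "\<not> E z y" and zV: "z \<in> V" and znS: "z \<notin> S4 V E v 0"
  shows "E z (v 0) \<and> E z (v 2) \<and> E z (v 3)"
proof -
  note A = memSD[OF xS] memSD[OF yS]
  have fl: "E x z" "\<not> E y z" "\<not> E y x" using zx nzy nxy Esym by blast+
  have dz: "z \<noteq> v 0" "z \<noteq> v 1" "z \<noteq> v 2" "z \<noteq> v 3" "z \<noteq> v 4"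
    using zx nzy A by auto
  have dz': "v 0 \<noteq> z" "v 1 \<noteq> z" "v 2 \<noteq> z" "v 3 \<noteq> z" "v 4 \<noteq> z" using dz by auto
  have dd: "z \<noteq> x" "z \<noteq> y" "x \<noteq> z" "y \<noteq> z" "y \<noteq> x" using zx nzy Eirr xy nxy fl by auto
  have zn: "\<not> (\<not> E z (v 0) \<and> E z (v 1) \<and> E z (v 2) \<and> E z (v 3) \<and> E z (v 4))"
    using memSI[OF zV dz] znS by blast
  note F = A fl dz dz' dd cyc vdist vdist' vV' zV zx nzy nxy xy
  have lf1: "\<not> (\<not> E z (v 0) \<and> E z (v 1) \<and> E z (v 2) \<and> E z (v 3) \<and> E z (v 4))"
  proof
    assume "\<not> E z (v 0) \<and> E z (v 1) \<and> E z (v 2) \<and> E z (v 3) \<and> E z (v 4)"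
    then have hh: "\<not> E z (v 0)" "E z (v 1)" "E z (v 2)" "E z (v 3)" "E z (v 4)" by blast+
    show False using zn hh by blast
  qed
  have lf2: "\<not> (\<not> E z (v 0) \<and> E z (v 1) \<and> E z (v 2) \<and> \<not> E z (v 3) \<and> E z (v 4))"
  proof
    assume "\<not> E z (v 0) \<and> E z (v 1) \<and> E z (v 2) \<and> \<not> E z (v 3) \<and> E z (v 4)"
    then have hh: "\<not> E z (v 0)" "E z (v 1)" "E z (v 2)" "\<not> E z (v 3)" "E z (v 4)" by blast+
    show False by (rule nochair[of "(v 0)" "(v 1)" y "(v 3)" z]) (simp_all add: F hh Esym[of "(v 0)" "z"] Esym[of "(v 1)" "z"] Esym[of "(v 2)" "z"] Esym[of "(v 3)" "z"] Esym[of "(v 4)" "z"]  del: One_nat_def)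
  qed
  have lf3: "\<not> (\<not> E z (v 0) \<and> E z (v 1) \<and> \<not> E z (v 2) \<and> E z (v 4))"
  proof
    assume "\<not> E z (v 0) \<and> E z (v 1) \<and> \<not> E z (v 2) \<and> E z (v 4)"
    then have hh: "\<not> E z (v 0)" "E z (v 1)" "\<not> E z (v 2)" "E z (v 4)" by blast+
    show False by (rule nochair[of "(v 0)" "(v 4)" y "(v 2)" z]) (simp_all add: F hh Esym[of "(v 0)" "z"] Esym[of "(v 1)" "z"] Esym[of "(v 2)" "z"] Esym[of "(v 3)" "z"] Esym[of "(v 4)" "z"]  del: One_nat_def)
  qed
  have lf4: "\<not> (\<not> E z (v 0) \<and> \<not> E z (v 1) \<and> E z (v 4))"
  proof
    assume "\<not> E z (v 0) \<and> \<not> E z (v 1) \<and> E z (v 4)"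
    then have hh: "\<not> E z (v 0)" "\<not> E z (v 1)" "E z (v 4)" by blast+
    show False by (rule nochair[of "(v 0)" "(v 1)" x z y]) (simp_all add: F hh Esym[of "(v 0)" "z"] Esym[of "(v 1)" "z"] Esym[of "(v 2)" "z"] Esym[of "(v 3)" "z"] Esym[of "(v 4)" "z"]  del: One_nat_def)
  qed
  have lf5: "\<not> (\<not> E z (v 0) \<and> \<not> E z (v 4))"
  proof
    assume "\<not> E z (v 0) \<and> \<not> E z (v 4)"
    then have hh: "\<not> E z (v 0)" "\<not> E z (v 4)" by blast+
    show False by (rule nochair[of "(v 0)" "(v 4)" x z y]) (simp_all add: F hh Esym[of "(v 0)" "z"] Esym[of "(v 1)" "z"] Esym[of "(v 2)" "z"] Esym[of "(v 3)" "z"] Esym[of "(v 4)" "z"]  del: One_nat_def)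
  qed
  have tg1: "E z (v 0)" using lf1 lf2 lf3 lf4 lf5  by blast
  have lf6: "\<not> (\<not> E z (v 2))"
  proof
    assume "\<not> E z (v 2)"
    then have hh: "\<not> E z (v 2)" by blast+
    show False by (rule noP5[of "(v 0)" z x "(v 2)" y]) (simp_all add: F hh Esym[of "(v 0)" "z"] Esym[of "(v 1)" "z"] Esym[of "(v 2)" "z"] Esym[of "(v 3)" "z"] Esym[of "(v 4)" "z"] tg1 del: One_nat_def)
  qed
  have tg2: "E z (v 2)" using lf6 tg1 by blast
  have lf7: "\<not> (\<not> E z (v 3))"
  proof
    assume "\<not> E z (v 3)"
    then have hh: "\<not> E z (v 3)" by blast+
    show False by (rule noP5[of "(v 0)" z x "(v 3)" y]) (simp_all add: F hh Esym[of "(v 0)" "z"] Esym[of "(v 1)" "z"] Esym[of "(v 2)" "z"] Esym[of "(v 3)" "z"] Esym[of "(v 4)" "z"] tg1 tg2 del: One_nat_def)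
  qed
  have tg3: "E z (v 3)" using lf7 tg1 tg2 by blast
  show ?thesis using tg1 tg2 tg3 by blast
qed

lemma TL2:
  assumes xS: "x \<in> S4 V E v 0" and yS: "y \<in> S4 V E v 0" and nxy: "\<not> E x y" and xy: "x \<noteq> y"
    and zx: "E z x" and nzy: "\<not> E z y" and zV: "z \<in> V"
    and wy: "E w y" and nwx: "\<not> E w x" and wV: "w \<in> V"
    and z0: "E z (v 0)" and z2: "E z (v 2)" and z3: "E z (v 3)"
    and w0: "E w (v 0)" and w2: "E w (v 2)" and w3: "E w (v 3)"
  shows "E z w"
proof -
  note A = memSD[OF xS] memSD[OF yS]
  have fl: "E x z" "\<not> E y z" "\<not> E y x" "E y w" "\<not> E x w" "E (v 0) z" "E (v 2) z" "E (v 3) z"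
    "E (v 0) w" "E (v 2) w" "E (v 3) w"
    using zx nzy nxy wy nwx z0 z2 z3 w0 w2 w3 Esym by blast+
  have dz: "z \<noteq> v 0" "z \<noteq> v 1" "z \<noteq> v 2" "z \<noteq> v 3" "z \<noteq> v 4"
    using zx nzy A by auto
  have dw: "w \<noteq> v 0" "w \<noteq> v 1" "w \<noteq> v 2" "w \<noteq> v 3" "w \<noteq> v 4"
    using wy nwx A by auto
  have dz': "v 0 \<noteq> z" "v 1 \<noteq> z" "v 2 \<noteq> z" "v 3 \<noteq> z" "v 4 \<noteq> z" using dz by auto
  have dw': "v 0 \<noteq> w" "v 1 \<noteq> w" "v 2 \<noteq> w" "v 3 \<noteq> w" "v 4 \<noteq> w" using dw by auto
  have dd: "z \<noteq> x" "z \<noteq> y" "x \<noteq> z" "y \<noteq> z" "y \<noteq> x" "w \<noteq> x" "w \<noteq> y" "x \<noteq> w" "y \<noteq> w"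
     "z \<noteq> w" "w \<noteq> z"
    using zx nzy wy nwx Eirr xy nxy fl by auto
  note F = A fl dz dz' dw dw' dd cyc vdist vdist' vV' zV wV zx nzy nxy xy wy nwx z0 z2 z3 w0 w2 w3
  have lf1: "\<not> (\<not> E z w)"
  proof
    assume "\<not> E z w"
    then have hh: "\<not> E z w" by blast+
    show False by (rule noP5[of x z "(v 0)" w y]) (simp_all add: F hh Esym[of "(v 1)" "z"] Esym[of "(v 4)" "z"] Esym[of "(v 1)" "w"] Esym[of "(v 4)" "w"] Esym[of "w" "z"]  del: One_nat_def)
  qed
  have tg1: "E z w" using lf1  by blast
  show ?thesis using tg1 by blast
qed

lemma Tcol:
  assumes xS: "x \<in> S4 V E v 0" and yS: "y \<in> S4 V E v 0" and nxy: "\<not> E x y" and xy: "x \<noteq> y"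
    and zx: "E z x" and nzy: "\<not> E z y" and zV: "z \<in> V" and znS: "z \<notin> S4 V E v 0"
    and wy: "E w y" and nwx: "\<not> E w x" and wV: "w \<in> V" and wnS: "w \<notin> S4 V E v 0"
    and pS: "p \<in> S4 V E v 0" and px: "p \<noteq> x" and py: "p \<noteq> y"
  shows False
proof -
  have nyx: "\<not> E y x" using nxy Esym by blast
  have Z: "E z (v 0) \<and> E z (v 2) \<and> E z (v 3)" by (rule TL1[OF xS yS nxy xy zx nzy zV znS])
  have W: "E w (v 0) \<and> E w (v 2) \<and> E w (v 3)" by (rule TL1[OF yS xS nyx xy[symmetric] wy nwx wV wnS])
  have zw: "E z w" using TL2[OF xS yS nxy xy zx nzy zV wy nwx wV] Z W by blast
  note A = memSD[OF xS] memSD[OF yS] memSD[OF pS]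
  obtain col where col: "\<forall>a\<in>V-{p}. col a < (4::nat)" "\<forall>a\<in>V-{p}. \<forall>b\<in>V-{p}. E a b \<longrightarrow> col a \<noteq> col b"
    using col_del[OF A(43)] by blast
  have NE: "\<And>a b. a \<in> V \<Longrightarrow> b \<in> V \<Longrightarrow> a \<noteq> p \<Longrightarrow> b \<noteq> p \<Longrightarrow> E a b \<Longrightarrow> col a \<noteq> col b"
    using col(2) by blast
  have LT: "\<And>a. a \<in> V \<Longrightarrow> a \<noteq> p \<Longrightarrow> col a < 4" using col(1) by blast
  have pz: "z \<noteq> p" "w \<noteq> p" using znS wnS pS by auto
  have pv: "v 0 \<noteq> p" "v 1 \<noteq> p" "v 2 \<noteq> p" "v 3 \<noteq> p" "v 4 \<noteq> p" using A by auto
  have pxy: "x \<noteq> p" "y \<noteq> p" using px py by auto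
  note M = vV' zV wV A(1) A(22) pz pv pxy
  have e: "E (v 2) (v 3)" "E z (v 2)" "E z (v 3)" "E w (v 2)" "E w (v 3)" "E z w" "E x (v 2)" "E x (v 3)" "E x z"
    "E y (v 2)" "E y (v 3)" "E y w" "E (v 1) (v 2)" "E (v 1) x" "E (v 1) y" "E (v 4) (v 3)" "E (v 4) x" "E (v 4) y"
    "E (v 0) (v 1)" "E (v 0) (v 4)" "E (v 0) z" "E (v 0) w"
    using Z W zw A cyc zx wy Esym by blast+
  have d: "col (v 2) \<noteq> col (v 3)" "col (v 2) \<noteq> col z" "col (v 2) \<noteq> col w" "col (v 3) \<noteq> col z"
    "col (v 3) \<noteq> col w" "col z \<noteq> col w"
    using NE[OF _ _ _ _ e(1)] NE[OF _ _ _ _ e(2)] NE[OF _ _ _ _ e(3)] NE[OF _ _ _ _ e(4)] NE[OF _ _ _ _ e(5)] NE[OF _ _ _ _ e(6)] M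
    by (auto simp del: One_nat_def)
  have l: "col (v 2) < 4" "col (v 3) < 4" "col z < 4" "col w < 4" "col x < 4" "col y < 4"
    "col (v 0) < 4" "col (v 1) < 4" "col (v 4) < 4"
    using LT M by (auto simp del: One_nat_def)
  have cx: "col x = col w"
  proof (rule ccontr)
    assume "col x \<noteq> col w"
    moreover have "col x \<noteq> col (v 2)" "col x \<noteq> col (v 3)" "col x \<noteq> col z"
      using NE[OF _ _ _ _ e(7)] NE[OF _ _ _ _ e(8)] NE[OF _ _ _ _ e(9)] M by (auto simp del: One_nat_def)
    ultimately show False using four_colors[OF l(1-4) l(5)] d by blast
  qed
  have cy: "col y = col z"
  proof (rule ccontr)
    assume "col y \<noteq> col z"
    moreover have "col y \<noteq> col (v 2)" "col y \<noteq> col (v 3)" "col y \<noteq> col w"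
      using NE[OF _ _ _ _ e(10)] NE[OF _ _ _ _ e(11)] NE[OF _ _ _ _ e(12)] M by (auto simp del: One_nat_def)
    ultimately show False using four_colors[OF l(1-4) l(6)] d by blast
  qed
  have c1: "col (v 1) = col (v 3)"
  proof (rule ccontr)
    assume "col (v 1) \<noteq> col (v 3)"
    moreover have "col (v 1) \<noteq> col (v 2)" "col (v 1) \<noteq> col x" "col (v 1) \<noteq> col y"
      using NE[OF _ _ _ _ e(13)] NE[OF _ _ _ _ e(14)] NE[OF _ _ _ _ e(15)] M by (auto simp del: One_nat_def)
    ultimately show False using four_colors[OF l(1-4) l(8)] d cx cy by auto
  qed
  have c4: "col (v 4) = col (v 2)"
  proof (rule ccontr)
    assume "col (v 4) \<noteq> col (v 2)"
    moreover have "col (v 4) \<noteq> col (v 3)" "col (v 4) \<noteq> col x" "col (v 4) \<noteq> col y"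
      using NE[OF _ _ _ _ e(16)] NE[OF _ _ _ _ e(17)] NE[OF _ _ _ _ e(18)] M by (auto simp del: One_nat_def)
    ultimately show False using four_colors[OF l(1-4) l(9)] d cx cy by auto
  qed
  have "col (v 0) \<noteq> col (v 1)" "col (v 0) \<noteq> col (v 4)" "col (v 0) \<noteq> col z" "col (v 0) \<noteq> col w"
    using NE[OF _ _ _ _ e(19)] NE[OF _ _ _ _ e(20)] NE[OF _ _ _ _ e(21)] NE[OF _ _ _ _ e(22)] M by (auto simp del: One_nat_def)
  then show False using four_colors[OF l(1-4) l(7)] d c1 c4 by auto
qed

end


context crit
begin

lemma noW:
  assumes "s1 \<in> S4 V E v 0" "s2 \<in> S4 V E v 0" "s3 \<in> S4 V E v 0" "s4 \<in> S4 V E v 0" "s5 \<in> S4 V E v 0"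
    and e: "E s1 s2" "E s2 s3" "E s3 s4" "E s4 s5" "E s5 s1"
  shows False
proof -
  note A = memSD[OF assms(1)] memSD[OF assms(2)] memSD[OF assms(3)] memSD[OF assms(4)] memSD[OF assms(5)]
  obtain col where col: "\<forall>a\<in>V-{v 0}. col a < (4::nat)" "\<forall>a\<in>V-{v 0}. \<forall>b\<in>V-{v 0}. E a b \<longrightarrow> col a \<noteq> col b"
    using col_del[OF vV'(1)] by blast
  have NE: "\<And>a b. a \<in> V \<Longrightarrow> b \<in> V \<Longrightarrow> a \<noteq> v 0 \<Longrightarrow> b \<noteq> v 0 \<Longrightarrow> E a b \<Longrightarrow> col a \<noteq> col b"
    using col(2) by blast
  have LT: "\<And>a. a \<in> V \<Longrightarrow> a \<noteq> v 0 \<Longrightarrow> col a < 4" using col(1) by blast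
  note M = vV' vdist' A
  have l: "col (v 1) < 4" "col (v 2) < 4" "col s1 < 4" "col s2 < 4" "col s3 < 4" "col s4 < 4" "col s5 < 4"
    using LT M by (auto simp del: One_nat_def)
  have d12: "col (v 1) \<noteq> col (v 2)" using NE[OF _ _ _ _ cyc(2)] M by (auto simp del: One_nat_def)
  have ds: "col s1 \<noteq> col (v 1)" "col s1 \<noteq> col (v 2)" "col s2 \<noteq> col (v 1)" "col s2 \<noteq> col (v 2)"
    "col s3 \<noteq> col (v 1)" "col s3 \<noteq> col (v 2)" "col s4 \<noteq> col (v 1)" "col s4 \<noteq> col (v 2)"
    "col s5 \<noteq> col (v 1)" "col s5 \<noteq> col (v 2)"
    using NE M by (auto simp del: One_nat_def)
  have de: "col s1 \<noteq> col s2" "col s2 \<noteq> col s3" "col s3 \<noteq> col s4" "col s4 \<noteq> col s5" "col s5 \<noteq> col s1"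
    using NE[OF _ _ _ _ e(1)] NE[OF _ _ _ _ e(2)] NE[OF _ _ _ _ e(3)] NE[OF _ _ _ _ e(4)] NE[OF _ _ _ _ e(5)] M
    by (auto simp del: One_nat_def)
  have "col s3 = col s1"
  proof (rule ccontr)
    assume "col s3 \<noteq> col s1"
    then show False using four_colors[OF l(1,2,3,4,5)] d12 ds de by auto
  qed
  moreover have "col s4 = col s2"
  proof (rule ccontr)
    assume "col s4 \<noteq> col s2"
    then show False using four_colors[OF l(1,2,3,4,6)] d12 ds de \<open>col s3 = col s1\<close> by auto
  qed
  moreover have "col s5 = col s1"
  proof (rule ccontr)
    assume "col s5 \<noteq> col s1"
    then show False using four_colors[OF l(1,2,3,4,7)] d12 ds de \<open>col s4 = col s2\<close> by auto
  qed
  ultimately show False using de by auto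
qed

lemma P3free:
  assumes aS: "a \<in> S4 V E v 0" and bS: "b \<in> S4 V E v 0" and cS: "c \<in> S4 V E v 0"
    and ab: "E a b" and bc: "E b c" and ac: "a \<noteq> c"
  shows False
proof (cases "E a c")
  case True
  note A = memSD[OF aS] memSD[OF bS] memSD[OF cS]
  have "a \<noteq> b" "b \<noteq> c" using ab bc Eirr by auto
  then show False
    by (rule_tac noK5[of a b c "v 1" "v 2"]) (use A ab bc True ac cyc vdist vV' in \<open>simp_all del: One_nat_def\<close>)
next
  case False
  note A = memSD[OF aS] memSD[OF bS] memSD[OF cS]
  obtain z where za: "E a z" and nzc: "\<not> E c z"
  proof (rule ccontr)
    assume "\<not> thesis"
    with that have "\<And>t. E a t \<Longrightarrow> E c t" by blast
    then show False using F2[OF A(1) A(43) ac False] by blast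
  qed
  have za': "E z a" using za Esym by blast
  have nzc': "\<not> E z c" using nzc Esym by blast
  have zV: "z \<in> V" using za EV2 by blast
  have L: "z \<in> S4 V E v 0 \<and> \<not> E z b" by (rule L3[OF aS bS cS ab bc False ac za' nzc' zV])
  have zS: "z \<in> S4 V E v 0" and nzb: "\<not> E z b" using L by auto
  have zb: "z \<noteq> b" using nzc bc Esym by blast
  obtain z' where zz': "E z z'" and nz'b: "\<not> E b z'"
  proof (rule ccontr)
    assume "\<not> thesis"
    with that have "\<And>t. E z t \<Longrightarrow> E b t" by blast
    then show False using F2[OF zV A(22) zb nzb] by blast
  qed
  have zz'': "E z' z" using zz' Esym by blast
  have nz'b': "\<not> E z' b" using nz'b Esym by blast
  have z'V: "z' \<in> V" using zz' EV2 by blast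
  have L': "z' \<in> S4 V E v 0 \<and> \<not> E z' a" by (rule L3[OF zS aS bS za' ab nzb zb zz'' nz'b' z'V])
  have z'S: "z' \<in> S4 V E v 0" and nz'a: "\<not> E z' a" using L' by auto
  show False
  proof (cases "E z' c")
    case True
    show False by (rule noW[OF z'S zS aS bS cS zz'' za' ab bc]) (use True Esym in blast)
  next
    case nc: False
    have dist: "z' \<noteq> z" "z' \<noteq> a" "z' \<noteq> b" "z' \<noteq> c" "z \<noteq> a" "z \<noteq> b" "z \<noteq> c" "a \<noteq> b" "b \<noteq> c" "a \<noteq> c"
      using zz'' nz'a ab nz'b' Esym Eirr zb za' nzc' bc ac nzb nc
      by metis+
    show False
      by (rule noP5[of z' z a b c]) (use dist zz'' za' ab bc nz'a nz'b' nc nzb nzc' False z'V zV A in \<open>simp_all del: One_nat_def\<close>)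
  qed
qed

end


context crit
begin

lemma Ttot:
  assumes xS: "x \<in> S4 V E v 0" and yS: "y \<in> S4 V E v 0" and xy: "x \<noteq> y" and nxy: "\<not> E x y"
    and pS: "p \<in> S4 V E v 0" and px: "p \<noteq> x" and py: "p \<noteq> y"
  shows "(\<forall>t. E x t \<longrightarrow> t \<in> S4 V E v 0 \<or> E y t) \<or> (\<forall>t. E y t \<longrightarrow> t \<in> S4 V E v 0 \<or> E x t)"
proof (rule ccontr)
  assume "\<not> ?thesis"
  then obtain z w where z: "E x z" "z \<notin> S4 V E v 0" "\<not> E y z" and w: "E y w" "w \<notin> S4 V E v 0" "\<not> E x w"
    by blast
  have z': "E z x" "\<not> E z y" using z Esym by blast+
  have w': "E w y" "\<not> E w x" using w Esym by blast+
  show False by (rule Tcol[OF xS yS nxy xy z'(1,2) EV2[OF z(1)] z(2) w'(1,2) EV2[OF w(1)] w(2) pS px py])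
qed

lemma uniq:
  assumes "u \<in> S4 V E v 0" "u' \<in> S4 V E v 0" "E u u'" "t \<in> S4 V E v 0" "E u t"
  shows "t = u'"
proof (rule ccontr)
  assume "t \<noteq> u'"
  moreover have "E t u" using assms(5) Esym by blast
  ultimately show False using P3free[OF assms(4) assms(1) assms(2) _ assms(3)] by blast
qed

lemma DD:
  assumes uS: "u \<in> S4 V E v 0" and u'S: "u' \<in> S4 V E v 0" and wS: "w \<in> S4 V E v 0" and w'S: "w' \<in> S4 V E v 0"
    and uu: "E u u'" and ww: "E w w'" and "u \<noteq> w" "u \<noteq> w'"
    and R1: "\<forall>t. E u t \<longrightarrow> t \<in> S4 V E v 0 \<or> E w t" and R2: "\<forall>t. E u t \<longrightarrow> t \<in> S4 V E v 0 \<or> E w' t"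
  shows False
proof (rule D2[OF memSD(1)[OF uS] memSD(1)[OF wS] memSD(1)[OF w'S] assms(7,8) ww])
  fix t assume t: "E u t"
  show "t = u' \<or> (E w t \<and> E w' t)"
  proof (cases "t \<in> S4 V E v 0")
    case True then show ?thesis using uniq[OF uS u'S uu True t] by blast
  next
    case False then show ?thesis using R1 R2 t by blast
  qed
qed

lemma K2logic:
  fixes R :: "'b \<Rightarrow> 'b \<Rightarrow> bool"
  assumes tr: "\<And>x y z. R x y \<Longrightarrow> R y z \<Longrightarrow> R x z"
    and "R a b \<or> R b a" "R a b' \<or> R b' a" "R a' b \<or> R b a'" "R a' b' \<or> R b' a'"
    and "\<not> (R a b \<and> R a b')" "\<not> (R a' b \<and> R a' b')" "\<not> (R b a \<and> R b a')" "\<not> (R b' a \<and> R b' a')"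
  shows False
  using assms by metis

theorem cardS: "card (S4 V E v 0) \<le> 6"
proof (rule ccontr)
  let ?S = "S4 V E v 0"
  let ?R = "\<lambda>u w. \<forall>t. E u t \<longrightarrow> t \<in> ?S \<or> E w t"
  assume "\<not> ?thesis"
  then have c7: "card ?S \<ge> 7" by simp
  have SV: "?S \<subseteq> V" using memSD(1) by blast
  have finS: "finite ?S" using finite_subset[OF SV finV] .
  have trR: "\<And>x y z. ?R x y \<Longrightarrow> ?R y z \<Longrightarrow> ?R x z" by blast
  have third: "\<And>x y. \<exists>p \<in> ?S. p \<noteq> x \<and> p \<noteq> y"
  proof -
    fix x y
    have "card (?S - {x, y}) \<ge> card ?S - card {x,y}" by (rule diff_card_le_card_Diff) simp
    moreover have "card {x,y} \<le> 2" by (simp add: card_insert_le_m1)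
    ultimately have "card (?S - {x,y}) > 0" using c7 by linarith
    then obtain p where "p \<in> ?S - {x,y}" by (metis card_gt_0_iff ex_in_conv)
    then show "\<exists>p \<in> ?S. p \<noteq> x \<and> p \<noteq> y" by blast
  qed
  have tot: "\<And>x y. x \<in> ?S \<Longrightarrow> y \<in> ?S \<Longrightarrow> x \<noteq> y \<Longrightarrow> \<not> E x y \<Longrightarrow> ?R x y \<or> ?R y x"
  proof -
    fix x y assume "x \<in> ?S" "y \<in> ?S" "x \<noteq> y" "\<not> E x y"
    moreover obtain p where "p \<in> ?S" "p \<noteq> x" "p \<noteq> y" using third by blast
    ultimately show "?R x y \<or> ?R y x" using Ttot by blast
  qed
  define I where "I = {x \<in> ?S. \<forall>y\<in>?S. \<not> E x y}"
  show False
  proof (cases "card I \<ge> 2")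
    case True
    have finI: "finite I" using finS unfolding I_def by simp
    obtain x where x: "x \<in> I" using True by (metis card.empty ex_in_conv not_numeral_le_zero)
    have "card (I - {x}) \<ge> 1" using True x finI by simp
    then obtain y where y: "y \<in> I - {x}" by (metis card.empty ex_in_conv not_one_le_zero)
    have xS: "x \<in> ?S" and yS: "y \<in> ?S" and xy: "x \<noteq> y" using x y unfolding I_def by auto
    have nxy: "\<not> E x y" using x yS unfolding I_def by blast
    have nyx: "\<not> E y x" using y xS unfolding I_def by blast
    from tot[OF xS yS xy nxy] show False
    proof
      assume R: "?R x y"
      have "\<And>t. E x t \<Longrightarrow> E y t" using R x unfolding I_def by blast
      then show False using F2[OF memSD(1)[OF xS] memSD(1)[OF yS] xy nxy] by blast
    next
      assume R: "?R y x"
      have "\<And>t. E y t \<Longrightarrow> E x t" using R y unfolding I_def by blast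
      then show False using F2[OF memSD(1)[OF yS] memSD(1)[OF xS] xy[symmetric] nyx] by blast
    qed
  next
    case False
    then have cI: "card I \<le> 1" by simp
    have IS: "I \<subseteq> ?S" unfolding I_def by blast
    have "card (?S - I) \<ge> card ?S - card I" by (rule diff_card_le_card_Diff) (use finS IS in \<open>auto intro: finite_subset\<close>)
    then have c6: "card (?S - I) \<ge> 6" using c7 cI by linarith
    then obtain a where a: "a \<in> ?S - I" by (metis card.empty ex_in_conv not_numeral_le_zero)
    then obtain a' where a': "a' \<in> ?S" "E a a'" unfolding I_def by blast
    have a'I: "a' \<notin> I" using a' a Esym unfolding I_def by blast
    have "card (?S - I - {a, a'}) \<ge> card (?S - I) - card {a, a'}"
      by (rule diff_card_le_card_Diff) simp
    moreover have "card {a,a'} \<le> 2" by (simp add: card_insert_le_m1)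
    ultimately have "card (?S - I - {a,a'}) > 0" using c6 by linarith
    then obtain b where b: "b \<in> ?S - I - {a,a'}" by (metis card_gt_0_iff ex_in_conv)
    then obtain b' where b': "b' \<in> ?S" "E b b'" unfolding I_def by blast
    have aS: "a \<in> ?S" and bS: "b \<in> ?S" using a b by auto
    have ba: "b \<noteq> a" "b \<noteq> a'" using b by auto
    have b'a: "b' \<noteq> a" "b' \<noteq> a'"
    proof -
      show "b' \<noteq> a"
      proof
        assume "b' = a"
        then have "E a b" using b' Esym by blast
        then have "b = a'" using uniq[OF aS a'(1) a'(2) bS] by blast
        then show False using ba by blast
      qed
      show "b' \<noteq> a'"
      proof
        assume "b' = a'"
        then have "E a' b" using b' Esym by blast
        moreover have "E a' a" using a' Esym by blast
        ultimately have "b = a" using uniq[OF a'(1) aS _ bS] by blast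
        then show False using ba by blast
      qed
    qed
    have n: "\<not> E a b" "\<not> E a b'" "\<not> E a' b" "\<not> E a' b'"
    proof -
      show "\<not> E a b" using uniq[OF aS a'(1) a'(2) bS] ba by blast
      show "\<not> E a b'" using uniq[OF aS a'(1) a'(2) b'(1)] b'a by blast
      have a'a: "E a' a" using a' Esym by blast
      show "\<not> E a' b" using uniq[OF a'(1) aS a'a bS] ba by blast
      show "\<not> E a' b'" using uniq[OF a'(1) aS a'a b'(1)] b'a by blast
    qed
    have n': "\<not> E b a" "\<not> E b' a" "\<not> E b a'" "\<not> E b' a'" using n Esym by blast+
    have aa': "a \<noteq> a'" "b \<noteq> b'" using a' b' Eirr by blast+
    have a'a: "E a' a" and b'b: "E b' b" using a' b' Esym by blast+
    show False
    proof (rule K2logic[of ?R a b b' a'])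
      show "\<And>x y z. ?R x y \<Longrightarrow> ?R y z \<Longrightarrow> ?R x z" by blast
      show "?R a b \<or> ?R b a" using tot[OF aS bS ba(1)[symmetric] n(1)] .
      show "?R a b' \<or> ?R b' a" using tot[OF aS b'(1) b'a(1)[symmetric] n(2)] .
      show "?R a' b \<or> ?R b a'" using tot[OF a'(1) bS ba(2)[symmetric] n(3)] .
      show "?R a' b' \<or> ?R b' a'" using tot[OF a'(1) b'(1) b'a(2)[symmetric] n(4)] .
      show "\<not> (?R a b \<and> ?R a b')"
        using DD[OF aS a'(1) bS b'(1) a'(2) b'(2) ba(1)[symmetric] b'a(1)[symmetric]] by blast
      show "\<not> (?R a' b \<and> ?R a' b')"
        using DD[OF a'(1) aS bS b'(1) a'a b'(2) ba(2)[symmetric] b'a(2)[symmetric]] by blast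
      show "\<not> (?R b a \<and> ?R b a')"
        using DD[OF bS b'(1) aS a'(1) b'(2) a'(2) ba(1) ba(2)] by blast
      show "\<not> (?R b' a \<and> ?R b' a')"
        using DD[OF b'(1) bS aS a'(1) b'b a'(2) b'a(1) b'a(2)] by blast
    qed
  qed
qed

end



lemma less5: "(n::nat) < 5 \<Longrightarrow> n = 0 \<or> n = 1 \<or> n = 2 \<or> n = 3 \<or> n = 4" by auto

lemma rot_facts:
  fixes i j k :: nat
  assumes "i < 5" "j < 5" "k < 5"
  shows "((i + j) mod 5 = (i + k) mod 5) = (j = k)"
    and "(((i + k) mod 5) = ((i + j) mod 5 + 1) mod 5) = (k = (j + 1) mod 5)"
  using less5[OF assms(1)] less5[OF assms(2)] less5[OF assms(3)] by (elim disjE; simp)+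

lemma rot_img:
  fixes i :: nat assumes "i < 5"
  shows "(\<lambda>j. v ((i + j) mod 5)) ` {0..<5} = v ` {0..<5}"
proof
  show "(\<lambda>j. v ((i + j) mod 5)) ` {0..<5} \<subseteq> v ` {0..<5}" by auto
  show "v ` {0..<5} \<subseteq> (\<lambda>j. v ((i + j) mod 5)) ` {0..<5}"
  proof
    fix x assume "x \<in> v ` {0..<5}"
    then obtain k where k: "k < 5" "x = v k" by auto
    have eq: "k = (i + ((k + 5 - i) mod 5)) mod 5" and lt: "(k + 5 - i) mod 5 < 5"
      using less5[OF assms] less5[OF k(1)] by (elim disjE; simp)+
    show "x \<in> (\<lambda>j. v ((i + j) mod 5)) ` {0..<5}"
    proof (rule image_eqI[where x="(k + 5 - i) mod 5"])
      show "x = v ((i + (k + 5 - i) mod 5) mod 5)" using k(2) eq by simp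
      show "(k + 5 - i) mod 5 \<in> {0..<5}" using lt by simp
    qed
  qed
qed

lemma rot_C5:
  assumes "induced_C5 V E v" "i < 5"
  shows "induced_C5 V E (\<lambda>j. v ((i + j) mod 5))"
  unfolding induced_C5_def
proof (intro conjI)
  have inj: "inj_on v {0..<5}" and sub: "v ` {0..<5} \<subseteq> V"
    and e: "\<forall>a<5. \<forall>b<5. E (v a) (v b) = (b = (a + 1) mod 5 \<or> a = (b + 1) mod 5)"
    using assms(1) unfolding induced_C5_def by auto
  show "inj_on (\<lambda>j. v ((i + j) mod 5)) {0..<5}"
  proof (rule inj_onI)
    fix j k assume jk: "j \<in> {0..<5}" "k \<in> {0..<5}" "v ((i + j) mod 5) = v ((i + k) mod 5)"
    then have "(i + j) mod 5 = (i + k) mod 5" using inj by (auto dest: inj_onD)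
    then show "j = k" using rot_facts(1)[OF assms(2)] jk by auto
  qed
  show "(\<lambda>j. v ((i + j) mod 5)) ` {0..<5} \<subseteq> V" using sub by auto
  show "\<forall>a<5. \<forall>b<5. E (v ((i + a) mod 5)) (v ((i + b) mod 5)) = (b = (a + 1) mod 5 \<or> a = (b + 1) mod 5)"
  proof (intro allI impI)
    fix a b :: nat assume ab: "a < 5" "b < 5"
    have "E (v ((i + a) mod 5)) (v ((i + b) mod 5)) =
      ((i + b) mod 5 = ((i + a) mod 5 + 1) mod 5 \<or> (i + a) mod 5 = ((i + b) mod 5 + 1) mod 5)"
      using e by simp
    also have "\<dots> = (b = (a + 1) mod 5 \<or> a = (b + 1) mod 5)"
      using rot_facts(2)[OF assms(2) ab(1) ab(2)] rot_facts(2)[OF assms(2) ab(2) ab(1)] by simp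
    finally show "E (v ((i + a) mod 5)) (v ((i + b) mod 5)) = (b = (a + 1) mod 5 \<or> a = (b + 1) mod 5)" .
  qed
qed

lemma rot_S4:
  assumes "i < 5"
  shows "S4 V E v i = S4 V E (\<lambda>j. v ((i + j) mod 5)) 0"
proof -
  have m: "((0::nat)+3) mod 5 = 3" "((0::nat)+4) mod 5 = 4" "((0::nat)+1) mod 5 = 1" "((0::nat)+2) mod 5 = 2" by simp_all
  show ?thesis unfolding S4_def rot_img[OF assms] m by simp
qed

theorem mainTheorem17:
  fixes V :: "'a set" and E :: "'a \<Rightarrow> 'a \<Rightarrow> bool" and v :: "nat \<Rightarrow> 'a"
  assumes "simple_graph V E"
    and "vertex_critical V E 5"
    and "H_free V E (verts_list P5_list) (adj_list P5_list)"
    and "H_free V E (verts_list chair_list) (adj_list chair_list)"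
    and "\<forall>L\<in>family_F. \<not> graph_iso V E (verts_list L) (adj_list L)"
    and "induced_C5 V E v"
  shows "\<forall>i<5. card (S4 V E v i) \<le> 6"
proof (intro allI impI)
  fix i :: nat assume i: "i < 5"
  interpret c: crit V E "\<lambda>j. v ((i + j) mod 5)"
    using assms(1-4) rot_C5[OF assms(6) i] by unfold_locales
  show "card (S4 V E v i) \<le> 6" unfolding rot_S4[OF i] by (rule c.cardS)
qed


end
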